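(* A unital hom-associative algebra $(V,\star,\alpha,1)$ is of type $I_1$ if and only if it is of type $II$.
   Context: Let $k$ be a commutative ring. A unital hom-associative algebra is a tuple $(V,\star,\alpha,1)$ where $V$ is a $k$-module, $\star:V\times V\to V$ is $k$-bilinear, $\alpha:V\to V$ is $k$-linear, and $1\in V$ satisfies $1\star x=x\star 1=x$ for all $x\in V$. It is of type $T$ if the identity for $T$ holds for all $x,y,z\in V$: $I_1$: $\alpha(x)\star(y\star z)=(x\star y)\star\alpha(z)$; $II$: $x\star\alpha(y\star z)=\alpha(x\star y)\star z$. *)

theory Defs
  imports Main "HOL.Modules"
begin

text \<open>A k-module V is modelled by a scalar multiplication scale :: 'k \<Rightarrow> 'v \<Rightarrow> 'v
  satisfying the axioms of the library locale module (k a commutative ring with 1).\<close>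

definition bilinear_map ::
  "('k::comm_ring_1 \<Rightarrow> 'v::ab_group_add \<Rightarrow> 'v) \<Rightarrow> ('v \<Rightarrow> 'v \<Rightarrow> 'v) \<Rightarrow> bool" where
  "bilinear_map scale mul \<longleftrightarrow>
     (\<forall>x y z. mul (x + y) z = mul x z + mul y z) \<and>
     (\<forall>x y z. mul x (y + z) = mul x y + mul x z) \<and>
     (\<forall>c x y. mul (scale c x) y = scale c (mul x y)) \<and>
     (\<forall>c x y. mul x (scale c y) = scale c (mul x y))"

definition unital_hom_assoc_algebra ::
  "('k::comm_ring_1 \<Rightarrow> 'v::ab_group_add \<Rightarrow> 'v) \<Rightarrow> ('v \<Rightarrow> 'v \<Rightarrow> 'v) \<Rightarrow> ('v \<Rightarrow> 'v) \<Rightarrow> 'v \<Rightarrow> bool" where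
  "unital_hom_assoc_algebra scale mul \<alpha> e \<longleftrightarrow>
     module scale \<and> bilinear_map scale mul \<and> module_hom scale scale \<alpha> \<and>
     (\<forall>x. mul e x = x \<and> mul x e = x)"

definition type_I1 :: "('v \<Rightarrow> 'v \<Rightarrow> 'v) \<Rightarrow> ('v \<Rightarrow> 'v) \<Rightarrow> bool" where
  "type_I1 mul \<alpha> \<longleftrightarrow> (\<forall>x y z. mul (\<alpha> x) (mul y z) = mul (mul x y) (\<alpha> z))"

definition type_II :: "('v \<Rightarrow> 'v \<Rightarrow> 'v) \<Rightarrow> ('v \<Rightarrow> 'v) \<Rightarrow> bool" where
  "type_II mul \<alpha> \<longleftrightarrow> (\<forall>x y z. mul x (\<alpha> (mul y z)) = mul (\<alpha> (mul x y)) z)"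

end

theory Submission
  imports Defs
begin

theorem proposition2p4:
  fixes scale :: "'k::comm_ring_1 \<Rightarrow> 'v::ab_group_add \<Rightarrow> 'v"
    and mul :: "'v \<Rightarrow> 'v \<Rightarrow> 'v" and \<alpha> :: "'v \<Rightarrow> 'v" and e :: 'v
  assumes "unital_hom_assoc_algebra scale mul \<alpha> e"
  shows "type_I1 mul \<alpha> \<longleftrightarrow> type_II mul \<alpha>"
proof
  have u: "\<And>x. mul e x = x" "\<And>x. mul x e = x"
    using assms unfolding unital_hom_assoc_algebra_def by auto
  {
    assume I: "type_I1 mul \<alpha>"
    have s: "\<And>x z. mul (\<alpha> x) z = mul x (\<alpha> z)"
      using I[unfolded type_I1_def, rule_format, of _ e] u by metis
    show "type_II mul \<alpha>" unfolding type_II_def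
    proof (intro allI)
      fix x y z
      have "mul x (\<alpha> (mul y z)) = mul (\<alpha> x) (mul y z)" using s by metis
      also have "\<dots> = mul (mul x y) (\<alpha> z)" using I unfolding type_I1_def by blast
      also have "\<dots> = mul (\<alpha> (mul x y)) z" using s by metis
      finally show "mul x (\<alpha> (mul y z)) = mul (\<alpha> (mul x y)) z" .
    qed
  }
  {
    assume II: "type_II mul \<alpha>"
    have a1: "\<And>y z. \<alpha> (mul y z) = mul (\<alpha> y) z"
      using II[unfolded type_II_def, rule_format, of e] u by metis
    have a2: "\<And>x y. mul x (\<alpha> y) = \<alpha> (mul x y)"
      using II[unfolded type_II_def, rule_format, of _ _ e] u by metis
    show "type_I1 mul \<alpha>" unfolding type_I1_def
    proof (intro allI)
      fix x y z
      have "mul (\<alpha> x) (mul y z) = \<alpha> (mul x (mul y z))" using a1 by metis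
      also have "\<dots> = mul x (\<alpha> (mul y z))" using a2 by metis
      also have "\<dots> = mul (\<alpha> (mul x y)) z" using II unfolding type_II_def by blast
      also have "\<dots> = \<alpha> (mul (mul x y) z)" using a1 by metis
      also have "\<dots> = mul (mul x y) (\<alpha> z)" using a2 by metis
      finally show "mul (\<alpha> x) (mul y z) = mul (mul x y) (\<alpha> z)" .
    qed
  }
qed

end
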